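(* Let $\mathbf{k}$ be an algebraically closed field with $\mathrm{char}(\mathbf{k})\neq 2$, let $S=\mathbf{k}[x,y,z,w]$, and let $\mathcal{H}$ be the standard graded Hilbert scheme parametrizing homogeneous ideals $I\subseteq S$ such that $S/I$ has Hilbert function $(1,4,4,4,\ldots)$. Let $\mathcal{X}$ be the closure in $\mathcal{H}$ of the (open) locus of ideals $I\in\mathcal{H}$ that are saturated. Then the lexicographic ideal $L=(x^2,xy,xz,xw,y^2,yz,yw^2,z^4)$ of $\mathcal{H}$ belongs to $\mathcal{X}$.
   Context: The lexicographic order is taken with $x>y>z>w$; the lexicographic ideal is the unique monomial ideal in $\mathcal{H}$ each of whose graded components is spanned by the lexicographically largest monomials of that degree. *)

theory Defs
  imports "HOL-Computational_Algebra.Polynomial" "HOL-Library.Poly_Mapping"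
begin

datatype var = X | Y | Z | W

type_synonym mon = "var \<Rightarrow>\<^sub>0 nat"
type_synonym 'k pol = "mon \<Rightarrow>\<^sub>0 'k"

definition mdeg :: "mon \<Rightarrow> nat" where
  "mdeg m = (\<Sum>v\<in>Poly_Mapping.keys m. Poly_Mapping.lookup m v)"

definition xmon :: "nat \<Rightarrow> nat \<Rightarrow> nat \<Rightarrow> nat \<Rightarrow> 'k::comm_ring_1 pol" where
  "xmon a b c d = Poly_Mapping.single
     (Poly_Mapping.single X a + Poly_Mapping.single Y b + Poly_Mapping.single Z c + Poly_Mapping.single W d) 1"

definition csmult :: "'k::comm_ring_1 \<Rightarrow> 'k pol \<Rightarrow> 'k pol" where
  "csmult c f = Poly_Mapping.single 0 c * f"

definition Sdeg :: "nat \<Rightarrow> 'k::comm_ring_1 pol set" where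
  "Sdeg d = {f. \<forall>m\<in>Poly_Mapping.keys f. mdeg m = d}"

definition hcomp :: "nat \<Rightarrow> 'k::comm_ring_1 pol \<Rightarrow> 'k pol" where
  "hcomp d f = (\<Sum>m\<in>{m\<in>Poly_Mapping.keys f. mdeg m = d}. Poly_Mapping.single m (Poly_Mapping.lookup f m))"

definition is_ideal :: "'k::comm_ring_1 pol set \<Rightarrow> bool" where
  "is_ideal I \<longleftrightarrow> 0 \<in> I \<and> (\<forall>f\<in>I. \<forall>g\<in>I. f + g \<in> I) \<and> (\<forall>f\<in>I. \<forall>g. g * f \<in> I)"

definition homogeneous_ideal :: "'k::comm_ring_1 pol set \<Rightarrow> bool" where
  "homogeneous_ideal I \<longleftrightarrow> is_ideal I \<and> (\<forall>f\<in>I. \<forall>d. hcomp d f \<in> I)"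

definition gen_ideal :: "'k::comm_ring_1 pol set \<Rightarrow> 'k pol set" where
  "gen_ideal G = \<Inter>{J. is_ideal J \<and> G \<subseteq> J}"

definition kdim :: "'k::field pol set \<Rightarrow> nat" where
  "kdim V = vector_space.dim csmult V"

(* Hilbert function of S/I:  dim_k (S/I)_d = dim S_d - dim I_d *)
definition hilb :: "'k::field pol set \<Rightarrow> nat \<Rightarrow> nat" where
  "hilb I d = kdim (Sdeg d :: 'k pol set) - kdim (I \<inter> Sdeg d)"

section \<open>k-points of the standard graded Hilbert scheme H with Hilbert function (1,4,4,...)\<close>

definition Hpts :: "'k::field pol set set" where
  "Hpts = {I. homogeneous_ideal I \<and> hilb I 0 = 1 \<and> (\<forall>d\<ge>1. hilb I d = 4)}"

(* m^N = polynomials all of whose terms have degree >= N *)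
definition mpow :: "nat \<Rightarrow> 'k::comm_ring_1 pol set" where
  "mpow N = {g. \<forall>m\<in>Poly_Mapping.keys g. N \<le> mdeg m}"

definition saturation :: "'k::comm_ring_1 pol set \<Rightarrow> 'k pol set" where
  "saturation I = {f. \<exists>N. \<forall>g\<in>mpow N. g * f \<in> I}"

definition saturated :: "'k::comm_ring_1 pol set \<Rightarrow> bool" where
  "saturated I \<longleftrightarrow> saturation I = I"

section \<open>Zariski topology on H (via the product of Grassmannians of the I_d)\<close>

definition is_frame :: "'k::field pol set \<Rightarrow> (nat \<Rightarrow> nat \<Rightarrow> 'k pol) \<Rightarrow> bool" where
  "is_frame I b \<longleftrightarrow> (\<forall>d. let r = kdim (I \<inter> Sdeg d) in
      (\<forall>i<r. b d i \<in> I \<inter> Sdeg d) \<and> inj_on (b d) {..<r}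
      \<and> module.independent csmult (b d ` {..<r})
      \<and> module.span csmult (b d ` {..<r}) = I \<inter> Sdeg d
      \<and> (\<forall>i\<ge>r. b d i = 0))"

(* affine coordinates of a frame: coefficient of monomial m in b d i *)
definition frame_coord :: "(nat \<Rightarrow> nat \<Rightarrow> 'k::zero pol) \<Rightarrow> nat \<times> nat \<times> mon \<Rightarrow> 'k" where
  "frame_coord b = (\<lambda>(d, i, m). Poly_Mapping.lookup (b d i) m)"

definition peval :: "(('v \<Rightarrow>\<^sub>0 nat) \<Rightarrow>\<^sub>0 'k::comm_ring_1) \<Rightarrow> ('v \<Rightarrow> 'k) \<Rightarrow> 'k" where
  "peval P a = (\<Sum>e\<in>Poly_Mapping.keys P. Poly_Mapping.lookup P e * (\<Prod>v\<in>Poly_Mapping.keys e. a v ^ Poly_Mapping.lookup e v))"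

(* Zariski closure in H of a set A of k-points: the closed subsets of H are exactly
   the sets {I \<in> H. every frame of I is a common zero of a family of polynomials} *)
definition zclosure :: "'k::field pol set set \<Rightarrow> 'k pol set set" where
  "zclosure A = {J \<in> Hpts. \<forall>P :: ((nat \<times> nat \<times> mon) \<Rightarrow>\<^sub>0 nat) \<Rightarrow>\<^sub>0 'k.
      (\<forall>I\<in>A. \<forall>b. is_frame I b \<longrightarrow> peval P (frame_coord b) = 0)
      \<longrightarrow> (\<forall>b. is_frame J b \<longrightarrow> peval P (frame_coord b) = 0)}"

definition Xcomp :: "'k::field pol set set" where
  "Xcomp = zclosure {I \<in> Hpts. saturated I}"

definition lexL :: "'k::comm_ring_1 pol set" where
  "lexL = gen_ideal {xmon 2 0 0 0, xmon 1 1 0 0, xmon 1 0 1 0, xmon 1 0 0 1,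
                     xmon 0 2 0 0, xmon 0 1 1 0, xmon 0 1 0 2, xmon 0 0 4 0}"

end

theory Submission
  imports Defs
begin

definition mk :: "nat \<Rightarrow> nat \<Rightarrow> nat \<Rightarrow> nat \<Rightarrow> mon" where
  "mk a b c e = Poly_Mapping.single X a + Poly_Mapping.single Y b + Poly_Mapping.single Z c + Poly_Mapping.single W e"

lemma lookup_mk [simp]:
  "Poly_Mapping.lookup (mk a b c e) X = a" "Poly_Mapping.lookup (mk a b c e) Y = b"
  "Poly_Mapping.lookup (mk a b c e) Z = c" "Poly_Mapping.lookup (mk a b c e) W = e"
  by (simp_all add: mk_def lookup_add lookup_single)

lemma UNIV_var: "(UNIV :: var set) = {X, Y, Z, W}"
  using var.exhaust by auto

lemma finite_var [simp]: "finite (UNIV :: var set)"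
  by (simp add: UNIV_var)

lemma mon_mk: "m = mk (Poly_Mapping.lookup m X) (Poly_Mapping.lookup m Y) (Poly_Mapping.lookup m Z) (Poly_Mapping.lookup m W)"
  by (rule poly_mapping_eqI, case_tac k) simp_all

lemma mk_inject [simp]: "mk a b c e = mk a' b' c' e' \<longleftrightarrow> a = a' \<and> b = b' \<and> c = c' \<and> e = e'"
  by (metis lookup_mk)

lemma mdeg_UNIV: "mdeg m = (\<Sum>v\<in>UNIV. Poly_Mapping.lookup m v)"
  unfolding mdeg_def by (rule sum.mono_neutral_left) (auto simp: in_keys_iff)

lemma mdeg_mk [simp]: "mdeg (mk a b c e) = a + b + c + e"
  by (simp add: mdeg_UNIV UNIV_var)

lemma mdeg_add: "mdeg (m + n) = mdeg m + mdeg n"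
  by (simp add: mdeg_UNIV lookup_add sum.distrib)

lemma mk_add: "mk a b c e + mk a' b' c' e' = mk (a+a') (b+b') (c+c') (e+e')"
  by (rule poly_mapping_eqI, case_tac k) (simp_all add: lookup_add)

lemma mk_zero: "mk 0 0 0 0 = 0"
  by (simp add: mk_def)

lemma xmon_mk: "xmon a b c e = Poly_Mapping.single (mk a b c e) 1"
  by (simp add: xmon_def mk_def)

lemma mons_finite: "finite {m :: mon. mdeg m = d}"
proof -
  have "{m :: mon. mdeg m = d} \<subseteq> (\<lambda>(a,b,c,e). mk a b c e) ` ({..d} \<times> {..d} \<times> {..d} \<times> {..d})"
  proof
    fix m :: mon assume "m \<in> {m. mdeg m = d}"
    hence h: "mdeg m = d" by simp
    have "m = mk (Poly_Mapping.lookup m X) (Poly_Mapping.lookup m Y) (Poly_Mapping.lookup m Z) (Poly_Mapping.lookup m W)"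
      by (rule mon_mk)
    moreover have "mdeg m = Poly_Mapping.lookup m X + Poly_Mapping.lookup m Y + Poly_Mapping.lookup m Z + Poly_Mapping.lookup m W"
      by (subst mon_mk) simp
    ultimately show "m \<in> (\<lambda>(a,b,c,e). mk a b c e) ` ({..d} \<times> {..d} \<times> {..d} \<times> {..d})"
      using h by (auto intro!: image_eqI[where x="(Poly_Mapping.lookup m X, Poly_Mapping.lookup m Y, Poly_Mapping.lookup m Z, Poly_Mapping.lookup m W)"])
  qed
  thus ?thesis by (rule finite_subset) auto
qed

definition mev :: "mon \<Rightarrow> (var \<Rightarrow> 'k::comm_ring_1) \<Rightarrow> 'k" where
  "mev m p = (\<Prod>v\<in>UNIV. p v ^ Poly_Mapping.lookup m v)"

definition ev :: "'k::comm_ring_1 pol \<Rightarrow> (var \<Rightarrow> 'k) \<Rightarrow> 'k" where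
  "ev f p = (\<Sum>m\<in>Poly_Mapping.keys f. Poly_Mapping.lookup f m * mev m p)"

lemma mev_mk: "mev (mk a b c e) p = p X ^ a * p Y ^ b * p Z ^ c * p W ^ e"
  by (simp add: mev_def UNIV_var mult_ac)

lemma mev_add: "mev (m + n) p = mev m p * mev n p"
  by (simp add: mev_def lookup_add power_add prod.distrib)

lemma mev_zero [simp]: "mev 0 p = 1"
  by (simp add: mev_def)

lemma mev_scale: "mev m (\<lambda>v. l * p v) = l ^ mdeg m * mev m p"
  by (simp add: mev_def mdeg_UNIV power_mult_distrib prod.distrib power_sum)

lemma ev_superset:
  assumes "finite A" "Poly_Mapping.keys f \<subseteq> A"
  shows "ev f p = (\<Sum>m\<in>A. Poly_Mapping.lookup f m * mev m p)"
  unfolding ev_def using assms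
  by (intro sum.mono_neutral_left) (auto simp: in_keys_iff)

lemma ev_add: "ev (f + g) p = ev f p + ev g p"
proof -
  let ?A = "Poly_Mapping.keys f \<union> Poly_Mapping.keys g"
  have "ev (f + g) p = (\<Sum>m\<in>?A. Poly_Mapping.lookup (f+g) m * mev m p)"
    by (rule ev_superset) (auto dest: subsetD[OF keys_add])
  also have "\<dots> = (\<Sum>m\<in>?A. Poly_Mapping.lookup f m * mev m p) + (\<Sum>m\<in>?A. Poly_Mapping.lookup g m * mev m p)"
    by (simp add: lookup_add distrib_right sum.distrib)
  also have "\<dots> = ev f p + ev g p"
    by (simp add: ev_superset[of ?A f p] ev_superset[of ?A g p])
  finally show ?thesis .
qed

lemma ev_zero [simp]: "ev 0 p = 0"
  by (simp add: ev_def)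

lemma ev_single [simp]: "ev (Poly_Mapping.single m c) p = c * mev m p"
  by (simp add: ev_def)

lemma ev_sum: "ev (sum F S) p = (\<Sum>i\<in>S. ev (F i) p)"
  by (induction S rule: infinite_finite_induct) (simp_all add: ev_add)

lemma ev_uminus: "ev (- f) p = - ev f p"
  using ev_add[of f "-f" p] by (simp add: eq_neg_iff_add_eq_0 add.commute)

lemma ev_diff: "ev (f - g) p = ev f p - ev g p"
  using ev_add[of "f - g" g p] by simp

lemma pm_expand:
  assumes "finite A" "Poly_Mapping.keys f \<subseteq> A"
  shows "f = (\<Sum>m\<in>A. Poly_Mapping.single m (Poly_Mapping.lookup f m))"
proof (rule poly_mapping_eqI)
  fix k
  have "Poly_Mapping.lookup (\<Sum>m\<in>A. Poly_Mapping.single m (Poly_Mapping.lookup f m)) k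
     = (\<Sum>m\<in>A. if m = k then Poly_Mapping.lookup f m else 0)"
    by (simp add: lookup_sum lookup_single when_def)
  also have "\<dots> = Poly_Mapping.lookup f k"
    using assms by (auto simp: in_keys_iff)
  finally show "Poly_Mapping.lookup f k = Poly_Mapping.lookup (\<Sum>m\<in>A. Poly_Mapping.single m (Poly_Mapping.lookup f m)) k" ..
qed

lemma pm_expand_keys: "f = (\<Sum>m\<in>Poly_Mapping.keys f. Poly_Mapping.single m (Poly_Mapping.lookup f m))"
  by (rule pm_expand) auto

lemma ev_mult: "ev (f * g) p = ev f p * ev g p"
proof -
  let ?F = "Poly_Mapping.keys f" and ?G = "Poly_Mapping.keys g"
  have "f * g = (\<Sum>m\<in>?F. Poly_Mapping.single m (Poly_Mapping.lookup f m)) * (\<Sum>n\<in>?G. Poly_Mapping.single n (Poly_Mapping.lookup g n))"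
    using pm_expand_keys[of f] pm_expand_keys[of g] by simp
  also have "\<dots> = (\<Sum>m\<in>?F. \<Sum>n\<in>?G. Poly_Mapping.single (m + n) (Poly_Mapping.lookup f m * Poly_Mapping.lookup g n))"
    by (simp add: sum_distrib_left sum_distrib_right mult_single sum.swap[of _ ?G])
  finally have "ev (f * g) p = (\<Sum>m\<in>?F. \<Sum>n\<in>?G. Poly_Mapping.lookup f m * Poly_Mapping.lookup g n * (mev m p * mev n p))"
    by (simp add: ev_sum mev_add)
  also have "\<dots> = ev f p * ev g p"
    by (simp add: ev_def sum_distrib_left sum_distrib_right mult_ac sum.swap[of _ ?G])
  finally show ?thesis .
qed

lemma ev_scale_hom:
  assumes "f \<in> Sdeg d"
  shows "ev f (\<lambda>v. l * p v) = l ^ d * ev f p"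
  using assms by (simp add: ev_def Sdeg_def mev_scale sum_distrib_left mult_ac)

lemma infinite_alg_closed: "infinite (UNIV :: 'k::alg_closed_field set)"
proof
  assume fin: "finite (UNIV :: 'k set)"
  define q :: "'k poly" where "q = (\<Prod>a\<in>UNIV. [:-a, 1:])"
  have dq: "degree q = card (UNIV :: 'k set)"
    unfolding q_def by (subst degree_prod_sum_eq) auto
  have "card (UNIV :: 'k set) > 0" using fin by (simp add: card_gt_0_iff)
  hence "degree (q + 1) = degree q" using dq by (intro degree_add_eq_left) simp
  hence "degree (q + 1) > 0" using dq \<open>card (UNIV :: 'k set) > 0\<close> by simp
  then obtain x where "poly (q + 1) x = 0" using alg_closed_imp_poly_has_root by blast
  moreover have "poly q x = 0"
    unfolding q_def poly_prod using fin by (intro prod_zero) (auto intro!: bexI[where x=x])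
  ultimately show False by simp
qed

lemma poly_zero_many_roots:
  fixes p :: "'k::alg_closed_field poly"
  assumes "\<And>x. x \<noteq> 0 \<Longrightarrow> poly p x = 0"
  shows "p = 0"
proof (rule ccontr)
  assume "p \<noteq> 0"
  hence "finite {x. poly p x = 0}" by (rule poly_roots_finite)
  hence "finite (insert 0 {x. poly p x = 0})" by simp
  moreover have "insert 0 {x. poly p x = 0} = UNIV" using assms by auto
  ultimately show False using infinite_alg_closed by metis
qed

definition UP :: "'k::comm_ring_1 pol \<Rightarrow> (var \<Rightarrow> 'k) \<Rightarrow> 'k poly" where
  "UP f q = (\<Sum>m\<in>Poly_Mapping.keys f. monom (Poly_Mapping.lookup f m * mev m q) (mdeg m))"

lemma poly_UP: "poly (UP f q) l = ev f (\<lambda>v. l * q v)"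
  by (simp add: UP_def ev_def poly_sum poly_monom mev_scale mult_ac)

lemma lookup_hcomp: "Poly_Mapping.lookup (hcomp n f) m = (if mdeg m = n then Poly_Mapping.lookup f m else 0)"
proof -
  have "Poly_Mapping.lookup (hcomp n f) m = (\<Sum>m'\<in>{m\<in>Poly_Mapping.keys f. mdeg m = n}. if m' = m then Poly_Mapping.lookup f m' else 0)"
    by (simp add: hcomp_def lookup_sum lookup_single when_def)
  also have "\<dots> = (if mdeg m = n then Poly_Mapping.lookup f m else 0)"
    by (auto simp: in_keys_iff)
  finally show ?thesis .
qed

lemma keys_hcomp: "Poly_Mapping.keys (hcomp n f) \<subseteq> Poly_Mapping.keys f"
  by (auto simp: in_keys_iff lookup_hcomp split: if_splits)

lemma ev_hcomp: "ev (hcomp n f) q = (\<Sum>m\<in>{m\<in>Poly_Mapping.keys f. mdeg m = n}. Poly_Mapping.lookup f m * mev m q)"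
  by (simp add: hcomp_def ev_sum)

lemma coeff_UP: "coeff (UP f q) n = ev (hcomp n f) q"
proof -
  have "coeff (UP f q) n = (\<Sum>m\<in>Poly_Mapping.keys f. if mdeg m = n then Poly_Mapping.lookup f m * mev m q else 0)"
    by (simp add: UP_def coeff_sum)
  also have "\<dots> = (\<Sum>m\<in>{m\<in>Poly_Mapping.keys f. mdeg m = n}. Poly_Mapping.lookup f m * mev m q)"
    by (simp add: sum.inter_filter)
  finally show ?thesis by (simp add: ev_hcomp)
qed

definition Ipts :: "(nat \<Rightarrow> var \<Rightarrow> 'k::comm_ring_1) \<Rightarrow> 'k pol set" where
  "Ipts q = {f. \<forall>k<4. \<forall>l. ev f (\<lambda>v. l * q k v) = 0}"

lemma Ipts_is_ideal: "is_ideal (Ipts q)"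
  by (simp add: is_ideal_def Ipts_def ev_add ev_mult)

lemma Ipts_UP: "f \<in> Ipts (q :: nat \<Rightarrow> var \<Rightarrow> 'k::alg_closed_field) \<longleftrightarrow> (\<forall>k<4. UP f (q k) = 0)"
proof
  assume "f \<in> Ipts q"
  thus "\<forall>k<4. UP f (q k) = 0"
    by (auto simp: Ipts_def intro!: poly_zero_many_roots simp: poly_UP)
next
  assume "\<forall>k<4. UP f (q k) = 0"
  thus "f \<in> Ipts q"
    by (auto simp: Ipts_def poly_UP[symmetric])
qed

lemma Ipts_homogeneous: "homogeneous_ideal (Ipts (q :: nat \<Rightarrow> var \<Rightarrow> 'k::alg_closed_field))"
  unfolding homogeneous_ideal_def
proof (intro conjI Ipts_is_ideal ballI allI)
  fix f d assume f: "f \<in> Ipts q"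
  hence z: "ev (hcomp d f) (q k) = 0" if "k < 4" for k
    using that by (auto simp: Ipts_UP coeff_UP[symmetric])
  have "UP (hcomp d f) (q k) = 0" if "k < 4" for k
  proof (rule poly_eqI)
    fix n
    have "coeff (UP (hcomp d f) (q k)) n = ev (hcomp n (hcomp d f)) (q k)" by (rule coeff_UP)
    also have "hcomp n (hcomp d f) = (if n = d then hcomp d f else 0)"
      by (rule poly_mapping_eqI) (auto simp: lookup_hcomp)
    finally show "coeff (UP (hcomp d f) (q k)) n = coeff 0 n" using z[OF that] by simp
  qed
  thus "hcomp d f \<in> Ipts q" by (simp add: Ipts_UP)
qed

lemma Ipts_hom_iff:
  assumes "f \<in> Sdeg d"
  shows "f \<in> Ipts q \<longleftrightarrow> (\<forall>k<4. ev f (q k) = 0)"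
proof
  assume "f \<in> Ipts q"
  hence "ev f (\<lambda>v. 1 * q k v) = 0" if "k < 4" for k using that unfolding Ipts_def by blast
  thus "\<forall>k<4. ev f (q k) = 0" by simp
next
  assume "\<forall>k<4. ev f (q k) = 0"
  thus "f \<in> Ipts q" using assms by (simp add: Ipts_def ev_scale_hom)
qed

lemma mpow_wpow: "xmon 0 0 0 N \<in> mpow N"
  by (simp add: mpow_def xmon_mk)

lemma Ipts_saturated:
  assumes "\<And>k. k < 4 \<Longrightarrow> q k W = (1 :: 'k::alg_closed_field)"
  shows "saturated (Ipts q)"
  unfolding saturated_def
proof
  show "saturation (Ipts q) \<subseteq> Ipts q"
  proof
    fix f assume "f \<in> saturation (Ipts q)"
    then obtain N where N: "\<forall>g\<in>mpow N. g * f \<in> Ipts q" by (auto simp: saturation_def)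
    hence "xmon 0 0 0 N * f \<in> Ipts q" using mpow_wpow by blast
    hence h: "ev (xmon 0 0 0 N) (\<lambda>v. l * q k v) * ev f (\<lambda>v. l * q k v) = 0" if "k < 4" for k l
      using that by (auto simp: Ipts_def ev_mult)
    have "UP f (q k) = 0" if "k < 4" for k
    proof (rule poly_zero_many_roots)
      fix l :: 'k assume "l \<noteq> 0"
      thus "poly (UP f (q k)) l = 0"
        using h[OF that, of l] assms[OF that] by (simp add: poly_UP xmon_mk mev_mk)
    qed
    thus "f \<in> Ipts q" by (simp add: Ipts_UP)
  qed
next
  show "Ipts q \<subseteq> saturation (Ipts q)"
  proof
    fix f assume "f \<in> Ipts q"
    hence "\<forall>g\<in>mpow 0. g * f \<in> Ipts q" using Ipts_is_ideal[of q] by (auto simp: is_ideal_def)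
    thus "f \<in> saturation (Ipts q)" by (auto simp: saturation_def)
  qed
qed

lemma lookup_csmult [simp]: "Poly_Mapping.lookup (csmult c f) m = c * Poly_Mapping.lookup f m"
  by (simp add: csmult_def mult_map_scale_conv_mult[symmetric] map.rep_eq when_def)

lemma csmult_single: "csmult c (Poly_Mapping.single m a) = Poly_Mapping.single m (c * a)"
  by (simp add: csmult_def mult_single)

interpretation vs: vector_space "csmult :: 'k::field \<Rightarrow> 'k pol \<Rightarrow> 'k pol"
  by unfold_locales (auto intro: poly_mapping_eqI simp: lookup_add algebra_simps)

lemma kdim_vs: "kdim V = vs.dim V"
  by (simp add: kdim_def)

lemma keys_csmult: "Poly_Mapping.keys (csmult c f) \<subseteq> Poly_Mapping.keys f"
  by (auto simp: in_keys_iff)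

lemma subspace_MS: "vs.subspace {f :: 'k::field pol. Poly_Mapping.keys f \<subseteq> M}"
  unfolding vs.subspace_def
  by (auto dest: subsetD[OF keys_add] subsetD[OF keys_csmult])

lemma span_singles:
  assumes "finite M"
  shows "vs.span ((\<lambda>m. Poly_Mapping.single m (1::'k::field)) ` M) = {f. Poly_Mapping.keys f \<subseteq> M}"
proof (rule vs.span_subspace)
  show "(\<lambda>m. Poly_Mapping.single m (1::'k)) ` M \<subseteq> {f. Poly_Mapping.keys f \<subseteq> M}" by auto
  show "vs.subspace {f :: 'k pol. Poly_Mapping.keys f \<subseteq> M}" by (rule subspace_MS)
  show "{f. Poly_Mapping.keys f \<subseteq> M} \<subseteq> vs.span ((\<lambda>m. Poly_Mapping.single m (1::'k)) ` M)"
  proof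
    fix f :: "'k pol" assume "f \<in> {f. Poly_Mapping.keys f \<subseteq> M}"
    hence "f = (\<Sum>m\<in>M. Poly_Mapping.single m (Poly_Mapping.lookup f m))"
      using assms by (intro pm_expand) auto
    also have "\<dots> = (\<Sum>m\<in>M. csmult (Poly_Mapping.lookup f m) (Poly_Mapping.single m 1))"
      by (simp add: csmult_single)
    also have "\<dots> \<in> vs.span ((\<lambda>m. Poly_Mapping.single m (1::'k)) ` M)"
      by (intro vs.span_sum vs.span_scale vs.span_base) auto
    finally show "f \<in> vs.span ((\<lambda>m. Poly_Mapping.single m (1::'k)) ` M)" .
  qed
qed

lemma indep_singles:
  "vs.independent ((\<lambda>m. Poly_Mapping.single m (1::'k::field)) ` M)"
  unfolding vs.independent_explicit_module
proof (intro allI impI)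
  fix t u v
  assume t: "finite t" "t \<subseteq> (\<lambda>m. Poly_Mapping.single m (1::'k)) ` M"
    and s: "(\<Sum>v\<in>t. csmult (u v) v) = 0" and v: "v \<in> t"
  from v t obtain m where m: "v = Poly_Mapping.single m 1" by auto
  have "0 = Poly_Mapping.lookup (\<Sum>v\<in>t. csmult (u v) v) m" using s by simp
  also have "\<dots> = (\<Sum>v'\<in>t. u v' * Poly_Mapping.lookup v' m)" by (simp add: lookup_sum)
  also have "\<dots> = u v * Poly_Mapping.lookup v m + (\<Sum>v'\<in>t - {v}. u v' * Poly_Mapping.lookup v' m)"
    using t v by (simp add: sum.remove)
  also have "(\<Sum>v'\<in>t - {v}. u v' * Poly_Mapping.lookup v' m) = 0"
  proof (rule sum.neutral, rule ballI)
    fix v' assume "v' \<in> t - {v}"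
    then obtain m' where "v' = Poly_Mapping.single m' 1" "m' \<noteq> m" using t m by auto
    thus "u v' * Poly_Mapping.lookup v' m = 0" by (simp add: lookup_single)
  qed
  finally show "u v = 0" using m by simp
qed

lemma dim_MS:
  assumes "finite M"
  shows "kdim {f :: 'k::field pol. Poly_Mapping.keys f \<subseteq> M} = card M"
proof -
  have "kdim {f :: 'k pol. Poly_Mapping.keys f \<subseteq> M} = card ((\<lambda>m. Poly_Mapping.single m (1::'k)) ` M)"
    unfolding kdim_vs using assms
    by (intro vs.dim_eq_card indep_singles) (simp add: span_singles vs.span_eq_iff[THEN iffD2, OF subspace_MS])
  also have "\<dots> = card M" by (rule card_image, rule inj_onI) (metis lookup_single_eq lookup_single_not_eq zero_neq_one)
  finally show ?thesis .
qed

definition std :: "nat \<Rightarrow> mon set" where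
  "std d = (if d = 0 then {mk 0 0 0 0}
     else if d = 1 then {mk 1 0 0 0, mk 0 1 0 0, mk 0 0 1 0, mk 0 0 0 1}
     else if d = 2 then {mk 0 0 0 2, mk 0 0 1 1, mk 0 0 2 0, mk 0 1 0 1}
     else {mk 0 0 0 d, mk 0 0 1 (d-1), mk 0 0 2 (d-2), mk 0 0 3 (d-3)})"

definition mons :: "nat \<Rightarrow> mon set" where "mons d = {m. mdeg m = d}"

definition Lmons :: "nat \<Rightarrow> mon set" where "Lmons d = {m. mdeg m = d \<and> m \<notin> std d}"

lemma std_sub: "std d \<subseteq> mons d"
  by (auto simp: std_def mons_def)

lemma finite_mons [simp]: "finite (mons d)"
  using mons_finite by (simp add: mons_def)

lemma finite_std [simp]: "finite (std d)"
  by (simp add: std_def)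

lemma finite_Lmons [simp]: "finite (Lmons d)"
  by (rule finite_subset[OF _ finite_mons[of d]]) (auto simp: Lmons_def mons_def)

lemma mons_split: "mons d = Lmons d \<union> std d" "Lmons d \<inter> std d = {}"
  using std_sub by (auto simp: Lmons_def mons_def)

lemma card_std: "card (std d) = (if d = 0 then 1 else 4)"
proof -
  consider "d = 0" | "d = 1" | "d = 2" | "d \<ge> 3" by linarith
  thus ?thesis
  proof cases
    case 4
    hence "d \<noteq> 0" "d \<noteq> 1" "d \<noteq> 2" "d - 1 \<noteq> d" "d - 2 \<noteq> d" "d - 3 \<noteq> d" "d - 2 \<noteq> d - 1" "d - 3 \<noteq> d - 1" "d - 3 \<noteq> d - 2" by auto
    thus ?thesis by (simp add: std_def)
  qed (simp_all add: std_def)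
qed

lemma card_mons: "card (mons d) = card (Lmons d) + card (std d)"
  using mons_split by (simp add: card_Un_disjoint)

definition dv :: "nat \<Rightarrow> nat \<Rightarrow> nat \<Rightarrow> nat \<Rightarrow> bool" where
  "dv a b c e \<longleftrightarrow> (2 \<le> a \<or> (1 \<le> a \<and> 1 \<le> b) \<or> (1 \<le> a \<and> 1 \<le> c) \<or> (1 \<le> a \<and> 1 \<le> e) \<or> 2 \<le> b
      \<or> (1 \<le> b \<and> 1 \<le> c) \<or> (1 \<le> b \<and> 2 \<le> e) \<or> 4 \<le> c)"

lemma std3: assumes "a + b + c + e = d" "d \<ge> 3"
  shows "mk a b c e \<in> std d \<longleftrightarrow> a = 0 \<and> b = 0 \<and> c \<le> 3"
proof -
  have "mk a b c e \<in> std d \<longleftrightarrow> (a = 0 \<and> b = 0 \<and> c = 0 \<and> e = d) \<or> (a = 0 \<and> b = 0 \<and> c = 1 \<and> e = d - 1) \<or> (a = 0 \<and> b = 0 \<and> c = 2 \<and> e = d - 2) \<or> (a = 0 \<and> b = 0 \<and> c = 3 \<and> e = d - 3)"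
    using assms(2) by (simp add: std_def)
  also have "\<dots> \<longleftrightarrow> a = 0 \<and> b = 0 \<and> c \<le> 3"
    using assms by auto
  finally show ?thesis .
qed

lemma std2: assumes "a + b + c + e = 2"
  shows "mk a b c e \<in> std 2 \<longleftrightarrow> (a = 0 \<and> b = 0) \<or> (a = 0 \<and> b = 1 \<and> e = 1)"
proof -
  have "mk a b c e \<in> std 2 \<longleftrightarrow> (a = 0 \<and> b = 0 \<and> c = 0 \<and> e = 2) \<or> (a = 0 \<and> b = 0 \<and> c = 1 \<and> e = 1) \<or> (a = 0 \<and> b = 0 \<and> c = 2 \<and> e = 0) \<or> (a = 0 \<and> b = 1 \<and> c = 0 \<and> e = 1)"
    by (simp add: std_def)
  also have "\<dots> \<longleftrightarrow> (a = 0 \<and> b = 0) \<or> (a = 0 \<and> b = 1 \<and> e = 1)"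
    using assms by presburger
  finally show ?thesis .
qed

lemma std1: assumes "a + b + c + e = 1"
  shows "mk a b c e \<in> std 1"
proof -
  have "mk a b c e \<in> std 1 \<longleftrightarrow> (a = 1 \<and> b = 0 \<and> c = 0 \<and> e = 0) \<or> (a = 0 \<and> b = 1 \<and> c = 0 \<and> e = 0) \<or> (a = 0 \<and> b = 0 \<and> c = 1 \<and> e = 0) \<or> (a = 0 \<and> b = 0 \<and> c = 0 \<and> e = 1)"
    by (simp add: std_def)
  thus ?thesis using assms by presburger
qed

lemma std0: assumes "a + b + c + e = 0"
  shows "mk a b c e \<in> std 0"
  using assms by (simp add: std_def)

lemma dv_iff: "dv a b c e \<longleftrightarrow> \<not> ((a = 1 \<and> b = 0 \<and> c = 0 \<and> e = 0) \<or> (a = 0 \<and> b = 1 \<and> c = 0 \<and> e \<le> 1) \<or> (a = 0 \<and> b = 0 \<and> c \<le> 3))"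
  unfolding dv_def by presburger

lemma std_mk_iff: "mk a b c e \<in> std (a + b + c + e) \<longleftrightarrow> \<not> dv a b c e"
proof -
  define d where "d = a + b + c + e"
  consider "d = 0" | "d = 1" | "d = 2" | "d \<ge> 3" by linarith
  then show ?thesis
  proof cases
    case 1
    hence "a + b + c + e = 0" by (simp add: d_def)
    thus ?thesis using std0[of a b c e] unfolding dv_iff by presburger
  next
    case 2
    hence "a + b + c + e = 1" by (simp add: d_def)
    thus ?thesis using std1[of a b c e] unfolding dv_iff by presburger
  next
    case 3
    hence s: "a + b + c + e = 2" by (simp add: d_def)
    have "mk a b c e \<in> std (a + b + c + e) \<longleftrightarrow> (a = 0 \<and> b = 0) \<or> (a = 0 \<and> b = 1 \<and> e = 1)"
      using std2[OF s] s by simp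
    moreover have "((a = 0 \<and> b = 0) \<or> (a = 0 \<and> b = 1 \<and> e = 1)) \<longleftrightarrow> ((a = 1 \<and> b = 0 \<and> c = 0 \<and> e = 0) \<or> (a = 0 \<and> b = 1 \<and> c = 0 \<and> e \<le> 1) \<or> (a = 0 \<and> b = 0 \<and> c \<le> 3))"
      using s by presburger
    ultimately show ?thesis unfolding dv_iff by blast
  next
    case 4
    have "mk a b c e \<in> std (a + b + c + e) \<longleftrightarrow> a = 0 \<and> b = 0 \<and> c \<le> 3"
      using std3[of a b c e d] 4 d_def by simp
    thus ?thesis using 4 d_def unfolding dv_iff by presburger
  qed
qed

definition Gs :: "mon set" where
  "Gs = {mk 2 0 0 0, mk 1 1 0 0, mk 1 0 1 0, mk 1 0 0 1, mk 0 2 0 0, mk 0 1 1 0, mk 0 1 0 2, mk 0 0 4 0}"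

definition LMon :: "mon set" where "LMon = {m. \<exists>g\<in>Gs. \<exists>r. m = g + r}"

lemma dv_mono: "dv ga gb gc ge \<Longrightarrow> ga \<le> a \<Longrightarrow> gb \<le> b \<Longrightarrow> gc \<le> c \<Longrightarrow> ge \<le> e \<Longrightarrow> dv a b c e"
  unfolding dv_def by presburger

lemma mk_split: "ga \<le> a \<Longrightarrow> gb \<le> b \<Longrightarrow> gc \<le> c \<Longrightarrow> ge \<le> e \<Longrightarrow>
  mk a b c e = mk ga gb gc ge + mk (a-ga) (b-gb) (c-gc) (e-ge)"
  by (simp add: mk_add)

lemma LMon_mk_iff: "mk a b c e \<in> LMon \<longleftrightarrow> dv a b c e"
proof
  assume "mk a b c e \<in> LMon"
  then obtain g r where g: "g \<in> Gs" and r: "mk a b c e = g + r" by (auto simp: LMon_def)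
  obtain ga gb gc ge where gm: "g = mk ga gb gc ge" and dg: "dv ga gb gc ge"
    using g unfolding Gs_def by (auto simp: dv_def)
  have "mk a b c e = mk (ga + Poly_Mapping.lookup r X) (gb + Poly_Mapping.lookup r Y) (gc + Poly_Mapping.lookup r Z) (ge + Poly_Mapping.lookup r W)"
    using r gm mon_mk[of r] mk_add by metis
  thus "dv a b c e" using dg by (intro dv_mono[OF dg]) auto
next
  assume "dv a b c e"
  then consider "2 \<le> a" | "1 \<le> a \<and> 1 \<le> b" | "1 \<le> a \<and> 1 \<le> c" | "1 \<le> a \<and> 1 \<le> e" | "2 \<le> b"
      | "1 \<le> b \<and> 1 \<le> c" | "1 \<le> b \<and> 2 \<le> e" | "4 \<le> c" unfolding dv_def by blast
  thus "mk a b c e \<in> LMon"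
  proof cases
    case 1 thus ?thesis unfolding LMon_def Gs_def using mk_split[of 2 a 0 b 0 c 0 e] by blast
  next
    case 2 thus ?thesis unfolding LMon_def Gs_def using mk_split[of 1 a 1 b 0 c 0 e] by blast
  next
    case 3 thus ?thesis unfolding LMon_def Gs_def using mk_split[of 1 a 0 b 1 c 0 e] by blast
  next
    case 4 thus ?thesis unfolding LMon_def Gs_def using mk_split[of 1 a 0 b 0 c 1 e] by blast
  next
    case 5 thus ?thesis unfolding LMon_def Gs_def using mk_split[of 0 a 2 b 0 c 0 e] by blast
  next
    case 6 thus ?thesis unfolding LMon_def Gs_def using mk_split[of 0 a 1 b 1 c 0 e] by blast
  next
    case 7 thus ?thesis unfolding LMon_def Gs_def using mk_split[of 0 a 1 b 0 c 2 e] by blast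
  next
    case 8 thus ?thesis unfolding LMon_def Gs_def using mk_split[of 0 a 0 b 4 c 0 e] by blast
  qed
qed

lemma LMon_iff: "m \<in> LMon \<longleftrightarrow> m \<notin> std (mdeg m)"
proof -
  have "m \<in> LMon \<longleftrightarrow> mk (Poly_Mapping.lookup m X) (Poly_Mapping.lookup m Y) (Poly_Mapping.lookup m Z) (Poly_Mapping.lookup m W) \<in> LMon"
    using mon_mk[of m] by simp
  also have "\<dots> \<longleftrightarrow> \<not> (mk (Poly_Mapping.lookup m X) (Poly_Mapping.lookup m Y) (Poly_Mapping.lookup m Z) (Poly_Mapping.lookup m W)
      \<in> std (Poly_Mapping.lookup m X + Poly_Mapping.lookup m Y + Poly_Mapping.lookup m Z + Poly_Mapping.lookup m W))"
    by (simp add: LMon_mk_iff std_mk_iff)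
  also have "\<dots> \<longleftrightarrow> m \<notin> std (mdeg m)"
    using mon_mk[of m] mdeg_mk by metis
  finally show ?thesis .
qed

lemma ideal_sum: "is_ideal J \<Longrightarrow> (\<And>i. i \<in> A \<Longrightarrow> F i \<in> J) \<Longrightarrow> sum F A \<in> J"
  by (induction A rule: infinite_finite_induct) (auto simp: is_ideal_def)

lemma MS_ideal: "is_ideal {f :: 'k::comm_ring_1 pol. Poly_Mapping.keys f \<subseteq> LMon}"
  unfolding is_ideal_def
proof (intro conjI ballI allI)
  show "0 \<in> {f :: 'k pol. Poly_Mapping.keys f \<subseteq> LMon}" by simp
next
  fix f g :: "'k pol" assume "f \<in> {f. Poly_Mapping.keys f \<subseteq> LMon}" "g \<in> {f. Poly_Mapping.keys f \<subseteq> LMon}"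
  thus "f + g \<in> {f. Poly_Mapping.keys f \<subseteq> LMon}" using keys_add[of f g] by auto
next
  fix f g :: "'k pol" assume f: "f \<in> {f. Poly_Mapping.keys f \<subseteq> LMon}"
  have "Poly_Mapping.keys (g * f) \<subseteq> LMon"
  proof
    fix m assume "m \<in> Poly_Mapping.keys (g * f)"
    then obtain a b where "m = a + b" "b \<in> Poly_Mapping.keys f" using keys_mult[of g f] by auto
    moreover from this f obtain g0 r where "g0 \<in> Gs" "b = g0 + r" by (auto simp: LMon_def)
    ultimately have "m = g0 + (r + a)" by (simp add: add_ac)
    thus "m \<in> LMon" using \<open>g0 \<in> Gs\<close> by (auto simp: LMon_def)
  qed
  thus "g * f \<in> {f. Poly_Mapping.keys f \<subseteq> LMon}" by simp
qed

lemma lexL_char: "(lexL :: 'k::comm_ring_1 pol set) = {f. Poly_Mapping.keys f \<subseteq> LMon}"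
proof
  have G: "{xmon 2 0 0 0, xmon 1 1 0 0, xmon 1 0 1 0, xmon 1 0 0 1, xmon 0 2 0 0, xmon 0 1 1 0, xmon 0 1 0 2, xmon 0 0 4 0}
      \<subseteq> {f :: 'k pol. Poly_Mapping.keys f \<subseteq> LMon}"
    unfolding xmon_mk LMon_def Gs_def by (auto intro!: exI[of _ 0])
  show "(lexL :: 'k pol set) \<subseteq> {f. Poly_Mapping.keys f \<subseteq> LMon}"
    unfolding lexL_def gen_ideal_def using MS_ideal G by blast
next
  show "{f. Poly_Mapping.keys f \<subseteq> LMon} \<subseteq> (lexL :: 'k pol set)"
  proof
    fix f :: "'k pol" assume f: "f \<in> {f. Poly_Mapping.keys f \<subseteq> LMon}"
    show "f \<in> lexL" unfolding lexL_def gen_ideal_def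
    proof (rule InterI)
      fix J :: "'k pol set" assume "J \<in> {J. is_ideal J \<and> {xmon 2 0 0 0, xmon 1 1 0 0, xmon 1 0 1 0, xmon 1 0 0 1, xmon 0 2 0 0, xmon 0 1 1 0, xmon 0 1 0 2, xmon 0 0 4 0} \<subseteq> J}"
      hence J: "is_ideal J" and GJ: "\<And>g. g \<in> Gs \<Longrightarrow> Poly_Mapping.single g 1 \<in> J"
        unfolding Gs_def xmon_mk by auto
      have "(\<Sum>m\<in>Poly_Mapping.keys f. Poly_Mapping.single m (Poly_Mapping.lookup f m)) \<in> J"
      proof (rule ideal_sum[OF J])
        fix m assume "m \<in> Poly_Mapping.keys f"
        with f obtain g r where g: "g \<in> Gs" "m = g + r" by (auto simp: LMon_def)
        have "Poly_Mapping.single m (Poly_Mapping.lookup f m) = Poly_Mapping.single r (Poly_Mapping.lookup f m) * Poly_Mapping.single g 1"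
          by (simp add: mult_single g(2) add.commute)
        thus "Poly_Mapping.single m (Poly_Mapping.lookup f m) \<in> J"
          using J GJ[OF g(1)] by (simp add: is_ideal_def)
      qed
      thus "f \<in> J" using pm_expand_keys[of f] by simp
    qed
  qed
qed

lemma Sdeg_MS: "Sdeg d = {f. Poly_Mapping.keys f \<subseteq> mons d}"
  by (auto simp: Sdeg_def mons_def)

lemma L_deg: "(lexL :: 'k::comm_ring_1 pol set) \<inter> Sdeg d = {f. Poly_Mapping.keys f \<subseteq> Lmons d}"
  unfolding lexL_char Sdeg_def Lmons_def using LMon_iff by auto

lemma kdim_Sdeg: "kdim (Sdeg d :: 'k::field pol set) = card (mons d)"
  by (simp add: Sdeg_MS dim_MS)

lemma kdim_L: "kdim ((lexL :: 'k::field pol set) \<inter> Sdeg d) = card (Lmons d)"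
  by (simp add: L_deg dim_MS)

lemma hilb_std: "kdim (I \<inter> Sdeg d) = card (Lmons d) \<Longrightarrow> hilb (I :: 'k::field pol set) d = card (std d)"
  by (simp add: hilb_def kdim_Sdeg card_mons)

lemma L_Hpts: "(lexL :: 'k::field pol set) \<in> Hpts"
  unfolding Hpts_def
proof (intro CollectI conjI allI impI)
  show "homogeneous_ideal (lexL :: 'k pol set)"
    unfolding homogeneous_ideal_def lexL_char using MS_ideal keys_hcomp by blast
  show "hilb (lexL :: 'k pol set) 0 = 1" by (simp add: hilb_std kdim_L card_std)
  fix d :: nat assume "1 \<le> d"
  thus "hilb (lexL :: 'k pol set) d = 4" by (simp add: hilb_std kdim_L card_std)
qed

definition bp :: "'k::comm_ring_1 \<Rightarrow> nat \<Rightarrow> var \<Rightarrow> 'k" where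
  "bp c k v = (case v of X \<Rightarrow> (if k = 0 then 1 else 0) | Y \<Rightarrow> (if k = 3 then 1 else 0)
     | Z \<Rightarrow> (if k = 0 then 0 else if k = 1 then 1 else if k = 2 then -1 else c) | W \<Rightarrow> 1)"

definition wv :: "var \<Rightarrow> nat" where
  "wv v = (case v of X \<Rightarrow> 5 | Y \<Rightarrow> 4 | Z \<Rightarrow> 1 | W \<Rightarrow> 0)"

definition wt :: "mon \<Rightarrow> nat" where
  "wt m = 5 * Poly_Mapping.lookup m X + 4 * Poly_Mapping.lookup m Y + Poly_Mapping.lookup m Z"

definition qp :: "'k::comm_ring_1 \<Rightarrow> 'k \<Rightarrow> nat \<Rightarrow> var \<Rightarrow> 'k" where
  "qp c t k v = t ^ wv v * bp c k v"

lemma mev_qp: "mev m (qp c t k) = t ^ wt m * mev m (bp c k)"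
  by (simp add: mev_def qp_def UNIV_var wv_def wt_def power_mult_distrib power_add mult_ac flip: power_mult)

lemma wt_mk [simp]: "wt (mk a b c e) = 5 * a + 4 * b + c"
  by (simp add: wt_def)

lemma bp_simps [simp]:
  "bp c 0 X = 1" "bp c 1 X = 0" "bp c 2 X = 0" "bp c 3 X = 0"
  "bp c 0 Y = 0" "bp c 1 Y = 0" "bp c 2 Y = 0" "bp c 3 Y = 1"
  "bp c 0 Z = 0" "bp c 1 Z = 1" "bp c 2 Z = -1" "bp c 3 Z = c"
  "bp c k W = 1" "bp c (Suc 0) X = 0" "bp c (Suc 0) Y = 0" "bp c (Suc 0) Z = 1"
  by (simp_all add: bp_def)

definition iA :: "(nat \<Rightarrow> 'k::field) \<Rightarrow> 'k" where "iA v = (v 1 - v 2) / 2"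
definition iB :: "(nat \<Rightarrow> 'k::field) \<Rightarrow> 'k" where "iB v = (v 1 + v 2) / 2 - v 0"
definition iG :: "'k::field \<Rightarrow> (nat \<Rightarrow> 'k) \<Rightarrow> 'k" where
  "iG c v = (v 3 - v 0 - iB v * c^2 - iA v * c) / (c^3 - c)"

definition interp :: "'k::field \<Rightarrow> nat \<Rightarrow> (nat \<Rightarrow> 'k) \<Rightarrow> mon \<Rightarrow> 'k" where
  "interp c d v s = (if d = 2 then
      (if Poly_Mapping.lookup s Y = 1 then v 3 - v 0 - iA v * c - iB v * c^2
       else if Poly_Mapping.lookup s Z = 0 then v 0 else if Poly_Mapping.lookup s Z = 1 then iA v else iB v)
    else (if Poly_Mapping.lookup s Z = 0 then v 0 else if Poly_Mapping.lookup s Z = 1 then iA v - iG c v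
       else if Poly_Mapping.lookup s Z = 2 then iB v else iG c v))"

lemma k4: "(k::nat) < 4 \<longleftrightarrow> k = 0 \<or> k = 1 \<or> k = 2 \<or> k = 3" by auto

lemma std_ge3: "d \<ge> 3 \<Longrightarrow> std d = {mk 0 0 0 d, mk 0 0 1 (d-1), mk 0 0 2 (d-2), mk 0 0 3 (d-3)}"
  by (simp add: std_def)

lemma sum_std_ge3:
  assumes "d \<ge> 3"
  shows "(\<Sum>s\<in>std d. F s) = F (mk 0 0 0 d) + F (mk 0 0 1 (d-1)) + F (mk 0 0 2 (d-2)) + F (mk 0 0 3 (d-3))"
proof -
  have "d - 1 \<noteq> d" "d - 2 \<noteq> d" "d - 3 \<noteq> d" "d - 2 \<noteq> d - 1" "d - 3 \<noteq> d - 1" "d - 3 \<noteq> d - 2" using assms by auto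
  thus ?thesis using assms by (simp add: std_ge3 add_ac)
qed

lemma sum_std_2:
  shows "(\<Sum>s\<in>std 2. F s) = F (mk 0 0 0 2) + F (mk 0 0 1 1) + F (mk 0 0 2 0) + F (mk 0 1 0 1)"
  by (simp add: std_def add_ac)

lemma sum_std_1:
  shows "(\<Sum>s\<in>std 1. F s) = F (mk 1 0 0 0) + F (mk 0 1 0 0) + F (mk 0 0 1 0) + F (mk 0 0 0 1)"
  by (simp add: std_def add_ac)

lemma sum_std_0:
  shows "(\<Sum>s\<in>std 0. F s) = F (mk 0 0 0 0)"
  by (simp add: std_def)

locale cpar =
  fixes c :: "'k::alg_closed_field"
  assumes two: "(2::'k) \<noteq> 0" and c0: "c \<noteq> 0" and c1: "c \<noteq> 1" and cm1: "c \<noteq> -1"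
begin

lemma four: "(4::'k) \<noteq> 0"
proof -
  have "(4::'k) = 2 * 2" by simp
  thus ?thesis using two by (metis mult_eq_0_iff)
qed

lemma sixteen: "(16::'k) \<noteq> 0"
proof -
  have "(16::'k) = 4 * 4" by simp
  thus ?thesis using four by (metis mult_eq_0_iff)
qed

lemma c3: "c^3 - c \<noteq> 0"
proof
  assume "c^3 - c = 0"
  hence "c * (c - 1) * (c + 1) = 0" by (simp add: algebra_simps power3_eq_cube)
  thus False using c0 c1 cm1 by (auto simp: add_eq_0_iff2)
qed

lemma interp_ok:
  assumes "d \<ge> 2" "k < 4"
  shows "(\<Sum>s\<in>std d. interp c d v s * mev s (bp c k)) = v k"
proof (cases "d = 2")
  case True
  show ?thesis using assms(2) unfolding True sum_std_2 k4
    using two four sixteen by (auto simp: interp_def mev_mk iA_def iB_def field_simps power2_eq_square)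
next
  case False
  hence d3: "d \<ge> 3" using assms by auto
  have S: "(\<Sum>s\<in>std d. interp c d v s * mev s (bp c k)) =
     v 0 + (iA v - iG c v) * bp c k Z + iB v * bp c k Z ^ 2 + iG c v * bp c k Z ^ 3"
    using d3 by (simp add: sum_std_ge3 interp_def mev_mk)
  have G: "iG c v * (c^3 - c) = v 3 - v 0 - iB v * c^2 - iA v * c"
    using c3 by (simp add: iG_def)
  have AB1: "iA v + iB v = v 1 - v 0"
  proof -
    have "2 * (iA v + iB v) = 2 * (v 1 - v 0)" using two four by (simp add: iA_def iB_def field_simps)
    thus ?thesis using mult_left_cancel[OF two] by blast
  qed
  have AB2: "iB v - iA v = v 2 - v 0"
  proof -
    have "2 * (iB v - iA v) = 2 * (v 2 - v 0)" using two four by (simp add: iA_def iB_def field_simps)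
    thus ?thesis using mult_left_cancel[OF two] by blast
  qed
  have "k = 0 \<or> k = 1 \<or> k = 2 \<or> k = 3" using assms(2) by auto
  moreover have "v 0 + (iA v - iG c v) * bp c 0 Z + iB v * bp c 0 Z ^ 2 + iG c v * bp c 0 Z ^ 3 = v 0" by simp
  moreover have "v 0 + (iA v - iG c v) * bp c 1 Z + iB v * bp c 1 Z ^ 2 + iG c v * bp c 1 Z ^ 3 = v 1"
    using AB1 by (simp add: algebra_simps)
  moreover have "v 0 + (iA v - iG c v) * bp c 2 Z + iB v * bp c 2 Z ^ 2 + iG c v * bp c 2 Z ^ 3 = v 2"
    using AB2 by (simp add: algebra_simps)
  moreover have "v 0 + (iA v - iG c v) * bp c 3 Z + iB v * bp c 3 Z ^ 2 + iG c v * bp c 3 Z ^ 3 = v 3"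
  proof -
    have "v 0 + (iA v - iG c v) * bp c 3 Z + iB v * bp c 3 Z ^ 2 + iG c v * bp c 3 Z ^ 3
        = v 0 + iA v * c + iB v * c^2 + iG c v * (c^3 - c)" by (simp add: algebra_simps)
    also have "\<dots> = v 3" using G by simp
    finally show ?thesis .
  qed
  ultimately show ?thesis using S by auto
qed

lemma two_cancel: "(x::'k) + y = 0 \<Longrightarrow> x - y = 0 \<Longrightarrow> x = 0 \<and> y = 0"
proof -
  assume a: "x + y = 0" "x - y = 0"
  have "2 * x = (x + y) + (x - y)" by algebra
  hence "2 * x = 0" using a by simp
  hence "x = 0" using two by simp
  thus ?thesis using a by simp
qed

lemma solve3:
  assumes "h1 + h2 + h3 = (0::'k)" "- h1 + h2 - h3 = 0" "h1 * c + h2 * c^2 + h3 * c^3 = 0"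
  shows "h1 = 0 \<and> h2 = 0 \<and> h3 = 0"
proof -
  have e1: "h2 + (h1 + h3) = h1 + h2 + h3" and e2: "h2 - (h1 + h3) = - h1 + h2 - h3" by algebra+
  have "h2 + (h1 + h3) = 0" by (simp only: e1 assms(1))
  moreover have "h2 - (h1 + h3) = 0" by (simp only: e2 assms(2))
  ultimately have h2: "h2 = 0" and "h1 + h3 = 0" using two_cancel by blast+
  hence h13: "h1 = - h3" by (simp add: eq_neg_iff_add_eq_0)
  have "h3 * (c^3 - c) = h1 * c + h2 * c^2 + h3 * c^3" unfolding h2 h13 by algebra
  hence "h3 * (c^3 - c) = 0" using assms(3) by simp
  hence "h3 = 0" using c3 by simp
  thus ?thesis using h2 h13 by simp
qed

lemma ev_std:
  assumes "Poly_Mapping.keys g \<subseteq> std d"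
  shows "ev g (qp c t k) = (\<Sum>s\<in>std d. Poly_Mapping.lookup g s * (t ^ wt s * mev s (bp c k)))"
  using ev_superset[OF finite_std assms, of "qp c t k"] by (simp add: mev_qp)

lemma uniq:
  assumes t: "t \<noteq> 0" and g: "Poly_Mapping.keys g \<subseteq> std d"
    and ev0: "\<And>k. k < 4 \<Longrightarrow> ev g (qp c t k) = 0"
  shows "g = 0"
proof -
  have E: "(\<Sum>s\<in>std d. Poly_Mapping.lookup g s * (t ^ wt s * mev s (bp c k))) = 0" if "k < 4" for k
    using ev0[OF that] ev_std[OF g] by simp
  note E0 = E[of 0] and E1 = E[of 1] and E2 = E[of 2] and E3 = E[of 3]
  have Z: "\<forall>s\<in>std d. Poly_Mapping.lookup g s = 0"
  proof -
    consider "d = 0" | "d = 1" | "d = 2" | "d \<ge> 3" by linarith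
    thus ?thesis
    proof cases
      case 1
      thus ?thesis using E0[unfolded 1] by (simp add: sum_std_0 mev_mk std_def)
    next
      case 2
      let ?x = "Poly_Mapping.lookup g (mk 1 0 0 0)" and ?y = "Poly_Mapping.lookup g (mk 0 1 0 0)"
      let ?z = "Poly_Mapping.lookup g (mk 0 0 1 0)" and ?w = "Poly_Mapping.lookup g (mk 0 0 0 1)"
      have e0: "?x * t^5 + ?w = 0" using E0[unfolded 2] by (simp add: sum_std_1[unfolded One_nat_def] mev_mk)
      have e1: "?z * t + ?w = 0" using E1[unfolded 2] by (simp add: sum_std_1[unfolded One_nat_def] mev_mk)
      have e2: "- (?z * t) + ?w = 0" using E2[unfolded 2] by (simp add: sum_std_1[unfolded One_nat_def] mev_mk)
      have e3: "?y * t^4 + ?z * t * c + ?w = 0" using E3[unfolded 2] by (simp add: sum_std_1[unfolded One_nat_def] mev_mk mult.assoc)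
      have "?w + ?z * t = 0" "?w - ?z * t = 0" using e1 e2 by (simp_all add: algebra_simps)
      hence "?w = 0" "?z * t = 0" using two_cancel by blast+
      hence w: "?w = 0" and z: "?z = 0" using t by auto
      hence "?x * t^5 = 0" "?y * t^4 = 0" using e0 e3 by auto
      hence "?x = 0" "?y = 0" using t by auto
      thus ?thesis using w z 2 by (simp add: std_def)
    next
      case 3
      let ?a = "Poly_Mapping.lookup g (mk 0 0 0 2)" and ?b = "Poly_Mapping.lookup g (mk 0 0 1 1)"
      let ?c = "Poly_Mapping.lookup g (mk 0 0 2 0)" and ?e = "Poly_Mapping.lookup g (mk 0 1 0 1)"
      have e0: "?a = 0" using E0[unfolded 3] by (simp add: sum_std_2 mev_mk power2_eq_square)
      have e1: "?a + ?b * t + ?c * t^2 = 0" using E1[unfolded 3] by (simp add: sum_std_2 mev_mk power2_eq_square)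
      have e2: "?a - ?b * t + ?c * t^2 = 0" using E2[unfolded 3] by (simp add: sum_std_2 mev_mk power2_eq_square)
      have e3: "?a + ?b * t * c + ?c * t^2 * c^2 + ?e * t^4 = 0" using E3[unfolded 3] by (simp add: sum_std_2 mev_mk power2_eq_square mult_ac)
      have "?c * t^2 + ?b * t = 0" "?c * t^2 - ?b * t = 0" using e0 e1 e2 by (simp_all add: algebra_simps)
      hence "?c * t^2 = 0" "?b * t = 0" using two_cancel by blast+
      hence c: "?c = 0" and b: "?b = 0" using t by auto
      hence "?e * t^4 = 0" using e0 e3 by simp
      hence "?e = 0" using t by simp
      thus ?thesis using e0 b c 3 by (simp add: std_def)
    next
      case 4
      let ?a = "Poly_Mapping.lookup g (mk 0 0 0 d)" and ?b = "Poly_Mapping.lookup g (mk 0 0 1 (d-1))"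
      let ?c = "Poly_Mapping.lookup g (mk 0 0 2 (d-2))" and ?e = "Poly_Mapping.lookup g (mk 0 0 3 (d-3))"
      have e0: "?a = 0" using E0 4 by (simp add: sum_std_ge3 mev_mk)
      have e1: "?b * t + ?c * t^2 + ?e * t^3 = 0" using E1 4 e0 by (simp add: sum_std_ge3 mev_mk power2_eq_square)
      have e2: "- (?b * t) + ?c * t^2 - ?e * t^3 = 0" using E2 4 e0 by (simp add: sum_std_ge3 mev_mk power2_eq_square power3_eq_cube)
      have e3: "(?b * t) * c + (?c * t^2) * c^2 + (?e * t^3) * c^3 = 0" using E3 4 e0 by (simp add: sum_std_ge3 mev_mk power_mult_distrib power2_eq_square mult_ac)
      from solve3[OF e1 e2 e3] have "?b = 0" "?c = 0" "?e = 0" using t by auto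
      thus ?thesis using e0 4 by (simp add: std_ge3)
    qed
  qed
  show "g = 0"
  proof (rule poly_mapping_eqI)
    fix m show "Poly_Mapping.lookup g m = Poly_Mapping.lookup 0 m"
      using Z g by (cases "m \<in> std d") (auto simp: in_keys_iff)
  qed
qed

end

definition Corr :: "'k::field \<Rightarrow> 'k \<Rightarrow> nat \<Rightarrow> 'k pol \<Rightarrow> 'k pol" where
  "Corr c t d f = (\<Sum>m\<in>Lmons d. \<Sum>s\<in>std d. Poly_Mapping.single s
      (Poly_Mapping.lookup f m * (interp c d (\<lambda>k. mev m (bp c k)) s * t ^ (wt m - wt s))))"

definition Phi :: "'k::field \<Rightarrow> 'k \<Rightarrow> nat \<Rightarrow> 'k pol \<Rightarrow> 'k pol" where
  "Phi c t d f = f - Corr c t d f"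

definition piL :: "nat \<Rightarrow> 'k::field pol \<Rightarrow> 'k pol" where
  "piL d f = (\<Sum>m\<in>Lmons d. Poly_Mapping.single m (Poly_Mapping.lookup f m))"

definition CP :: "'k::field \<Rightarrow> nat \<Rightarrow> 'k pol \<Rightarrow> mon \<Rightarrow> 'k poly" where
  "CP c d f n = [:Poly_Mapping.lookup f n:] - (if n \<in> std d then
      (\<Sum>m\<in>Lmons d. monom (Poly_Mapping.lookup f m * interp c d (\<lambda>k. mev m (bp c k)) n) (wt m - wt n)) else 0)"

lemma lookup_Corr: "Poly_Mapping.lookup (Corr c t d f) n = (if n \<in> std d then
   (\<Sum>m\<in>Lmons d. Poly_Mapping.lookup f m * (interp c d (\<lambda>k. mev m (bp c k)) n * t ^ (wt m - wt n))) else 0)"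
  by (cases "n \<in> std d") (simp_all add: Corr_def lookup_sum lookup_single when_def)

lemma lookup_Phi: "Poly_Mapping.lookup (Phi c t d f) n = Poly_Mapping.lookup f n - Poly_Mapping.lookup (Corr c t d f) n"
  by (simp add: Phi_def lookup_minus)

lemma lookup_Phi_nonstd: "n \<notin> std d \<Longrightarrow> Poly_Mapping.lookup (Phi c t d f) n = Poly_Mapping.lookup f n"
  by (simp add: lookup_Phi lookup_Corr)

lemma Phi_poly: "Poly_Mapping.lookup (Phi c t d f) n = poly (CP c d f n) t"
  by (simp add: lookup_Phi lookup_Corr CP_def poly_sum poly_monom mult_ac)

lemma module_csmult: "module (csmult :: 'k::field \<Rightarrow> 'k pol \<Rightarrow> 'k pol)"
  using vs.vector_space_axioms by (simp add: module_iff_vector_space)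

lemma Phi_hom: "module_hom csmult csmult (Phi c t d :: 'k::field pol \<Rightarrow> 'k pol)"
  unfolding module_hom_iff
proof (intro conjI allI module_csmult)
  fix x y :: "'k pol"
  show "Phi c t d (x + y) = Phi c t d x + Phi c t d y"
    by (rule poly_mapping_eqI)
       (simp add: lookup_Phi lookup_Corr lookup_add algebra_simps sum.distrib)
next
  fix a :: 'k and x :: "'k pol"
  show "Phi c t d (csmult a x) = csmult a (Phi c t d x)"
    by (rule poly_mapping_eqI)
       (simp add: lookup_Phi lookup_Corr algebra_simps sum_distrib_left)
qed

lemma Lmons_mk: "mk a b c e \<in> Lmons d \<longleftrightarrow> a + b + c + e = d \<and> dv a b c e"
  unfolding Lmons_def using std_mk_iff[of a b c e] by auto

lemma Lmons_cases: "m \<in> Lmons d \<Longrightarrow> \<exists>a b c e. m = mk a b c e \<and> a + b + c + e = d \<and> dv a b c e"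
  using mon_mk[of m] Lmons_mk by metis

lemma Lmons_small: "d \<le> 1 \<Longrightarrow> Lmons d = {}"
proof (rule ccontr)
  assume "d \<le> 1" "Lmons d \<noteq> {}"
  then obtain a b c e where "a + b + c + e = d" "dv a b c e" using Lmons_cases by blast
  with \<open>d \<le> 1\<close> show False unfolding dv_def by presburger
qed

lemma wt_std2: "s \<in> std 2 \<Longrightarrow> wt s \<le> 4"
  by (auto simp: std_def)

lemma wt_std3: "s \<in> std d \<Longrightarrow> d \<ge> 3 \<Longrightarrow> wt s \<le> 3"
proof -
  assume "s \<in> std d" "d \<ge> 3"
  hence "s \<in> {mk 0 0 0 d, mk 0 0 1 (d-1), mk 0 0 2 (d-2), mk 0 0 3 (d-3)}" using std_ge3 by blast
  thus ?thesis by auto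
qed

lemma wt_less: assumes "m \<in> Lmons d" "s \<in> std d" shows "wt s < wt m"
proof -
  obtain a b c e where m: "m = mk a b c e" "a + b + c + e = d" "dv a b c e" using Lmons_cases[OF assms(1)] by blast
  have d2: "d \<ge> 2"
  proof (rule ccontr)
    assume "\<not> d \<ge> 2"
    hence "Lmons d = {}" by (intro Lmons_small) simp
    thus False using assms(1) by simp
  qed
  show ?thesis
  proof (cases "d = 2")
    case True
    have "5 * a + 4 * b + c \<ge> 5" using m(2,3) True unfolding dv_def by presburger
    moreover have "wt s \<le> 4" using wt_std2 assms(2) True by blast
    ultimately show ?thesis using m(1) by simp
  next
    case False
    have "5 * a + 4 * b + c \<ge> 4" using m(3) unfolding dv_def by presburger
    moreover have "wt s \<le> 3" using wt_std3 assms(2) False d2 by simp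
    ultimately show ?thesis using m(1) by simp
  qed
qed

lemma CP_0:
  assumes "Poly_Mapping.keys f \<subseteq> Lmons d"
  shows "poly (CP c d f n) 0 = Poly_Mapping.lookup f n"
proof -
  have "poly (monom (Poly_Mapping.lookup f m * interp c d (\<lambda>k. mev m (bp c k)) n) (wt m - wt n)) 0 = 0"
    if "m \<in> Lmons d" "n \<in> std d" for m
    using wt_less[OF that] by (simp add: poly_monom)
  thus ?thesis by (simp add: CP_def poly_sum)
qed

lemma piL_lookup: "Poly_Mapping.lookup (piL d f) n = (if n \<in> Lmons d then Poly_Mapping.lookup f n else 0)"
  by (simp add: piL_def lookup_sum lookup_single when_def)

lemma keys_piL: "Poly_Mapping.keys (piL d f) \<subseteq> Lmons d"
  by (auto simp: in_keys_iff piL_lookup split: if_splits)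

lemma Phi_piL: "Poly_Mapping.keys f \<subseteq> Lmons d \<Longrightarrow> piL d (Phi c t d f) = f"
  by (rule poly_mapping_eqI) (auto simp: piL_lookup lookup_Phi_nonstd Lmons_def in_keys_iff)

lemma Phi_Sdeg:
  assumes "Poly_Mapping.keys f \<subseteq> Lmons d"
  shows "Phi c t d f \<in> Sdeg d"
  unfolding Sdeg_def
proof (intro CollectI ballI)
  fix m assume m: "m \<in> Poly_Mapping.keys (Phi c t d f)"
  show "mdeg m = d"
  proof (rule ccontr)
    assume "mdeg m \<noteq> d"
    hence "m \<notin> std d" "m \<notin> Lmons d" using std_sub by (auto simp: mons_def Lmons_def)
    hence "Poly_Mapping.lookup (Phi c t d f) m = 0" using assms by (auto simp: lookup_Phi_nonstd in_keys_iff)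
    thus False using m by (simp add: in_keys_iff)
  qed
qed

context cpar begin

lemma Phi_ev:
  assumes f: "Poly_Mapping.keys f \<subseteq> Lmons d" and k: "k < 4"
  shows "ev (Phi c t d f) (qp c t k) = 0"
proof (cases "d \<le> 1")
  case True
  hence "f = 0" using f Lmons_small by auto
  thus ?thesis by (simp add: Phi_def Corr_def)
next
  case False
  hence d2: "d \<ge> 2" by simp
  have "ev (Corr c t d f) (qp c t k) = (\<Sum>m\<in>Lmons d. \<Sum>s\<in>std d.
      Poly_Mapping.lookup f m * (interp c d (\<lambda>k. mev m (bp c k)) s * t ^ (wt m - wt s)) * (t ^ wt s * mev s (bp c k)))"
    by (simp add: Corr_def ev_sum mev_qp)
  also have "\<dots> = (\<Sum>m\<in>Lmons d. Poly_Mapping.lookup f m * t ^ wt m * (\<Sum>s\<in>std d. interp c d (\<lambda>k. mev m (bp c k)) s * mev s (bp c k)))"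
  proof (rule sum.cong[OF refl])
    fix m assume m: "m \<in> Lmons d"
    have "t ^ (wt m - wt s) * t ^ wt s = t ^ wt m" if "s \<in> std d" for s
      using wt_less[OF m that] by (simp add: power_add[symmetric])
    hence eqs: "Poly_Mapping.lookup f m * (interp c d (\<lambda>k. mev m (bp c k)) s * t ^ (wt m - wt s)) * (t ^ wt s * mev s (bp c k))
        = Poly_Mapping.lookup f m * t ^ wt m * (interp c d (\<lambda>k. mev m (bp c k)) s * mev s (bp c k))" if "s \<in> std d" for s
    proof -
      have "Poly_Mapping.lookup f m * (interp c d (\<lambda>k. mev m (bp c k)) s * t ^ (wt m - wt s)) * (t ^ wt s * mev s (bp c k))
          = Poly_Mapping.lookup f m * (interp c d (\<lambda>k. mev m (bp c k)) s * mev s (bp c k)) * (t ^ (wt m - wt s) * t ^ wt s)"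
        by (simp only: ac_simps)
      also have "\<dots> = Poly_Mapping.lookup f m * (interp c d (\<lambda>k. mev m (bp c k)) s * mev s (bp c k)) * t ^ wt m"
        using that \<open>\<And>s. s \<in> std d \<Longrightarrow> t ^ (wt m - wt s) * t ^ wt s = t ^ wt m\<close> by simp
      finally show ?thesis by (simp only: ac_simps)
    qed
    thus "(\<Sum>s\<in>std d. Poly_Mapping.lookup f m * (interp c d (\<lambda>k. mev m (bp c k)) s * t ^ (wt m - wt s)) * (t ^ wt s * mev s (bp c k)))
        = Poly_Mapping.lookup f m * t ^ wt m * (\<Sum>s\<in>std d. interp c d (\<lambda>k. mev m (bp c k)) s * mev s (bp c k))"
      by (simp only: sum_distrib_left) (intro sum.cong refl eqs)
  qed
  also have "\<dots> = (\<Sum>m\<in>Lmons d. Poly_Mapping.lookup f m * t ^ wt m * mev m (bp c k))"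
    using interp_ok[OF d2 k] by simp
  also have "\<dots> = ev f (qp c t k)"
    using ev_superset[OF finite_Lmons f, of "qp c t k"] by (simp add: mev_qp mult_ac)
  finally show ?thesis by (simp add: Phi_def ev_diff)
qed

end

context cpar begin

lemma qpW: "qp c t k W = 1"
  by (simp add: qp_def wv_def)

lemma Phi_surj:
  assumes t: "t \<noteq> 0" and g: "g \<in> Sdeg d" and ev0: "\<And>k. k < 4 \<Longrightarrow> ev g (qp c t k) = 0"
  shows "Phi c t d (piL d g) = g"
proof -
  define h where "h = g - Phi c t d (piL d g)"
  have "Poly_Mapping.keys h \<subseteq> std d"
  proof
    fix n assume n: "n \<in> Poly_Mapping.keys h"
    show "n \<in> std d"
    proof (rule ccontr)
      assume ns: "n \<notin> std d"
      have "Poly_Mapping.lookup h n = Poly_Mapping.lookup g n - (if n \<in> Lmons d then Poly_Mapping.lookup g n else 0)"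
        using ns by (simp add: h_def lookup_minus lookup_Phi_nonstd piL_lookup)
      also have "\<dots> = 0"
      proof (cases "n \<in> Lmons d")
        case False
        hence "mdeg n \<noteq> d" using ns by (simp add: Lmons_def)
        hence "n \<notin> Poly_Mapping.keys g" using g by (auto simp: Sdeg_def)
        thus ?thesis using False by (simp add: in_keys_iff)
      qed simp
      finally show False using n by (simp add: in_keys_iff)
    qed
  qed
  moreover have "ev h (qp c t k) = 0" if "k < 4" for k
    using ev0[OF that] Phi_ev[OF keys_piL[of d g] that, of t] by (simp add: h_def ev_diff)
  ultimately have "h = 0" using uniq[OF t] by blast
  thus ?thesis by (simp add: h_def)
qed

lemma It_deg:
  assumes t: "t \<noteq> 0"
  shows "Ipts (qp c t) \<inter> Sdeg d = Phi c t d ` {f. Poly_Mapping.keys f \<subseteq> Lmons d}"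
proof
  show "Ipts (qp c t) \<inter> Sdeg d \<subseteq> Phi c t d ` {f. Poly_Mapping.keys f \<subseteq> Lmons d}"
  proof
    fix g assume g: "g \<in> Ipts (qp c t) \<inter> Sdeg d"
    hence "\<And>k. k < 4 \<Longrightarrow> ev g (qp c t k) = 0" using Ipts_hom_iff by blast
    hence "g = Phi c t d (piL d g)" using Phi_surj[OF t] g by auto
    thus "g \<in> Phi c t d ` {f. Poly_Mapping.keys f \<subseteq> Lmons d}" using keys_piL by blast
  qed
next
  show "Phi c t d ` {f. Poly_Mapping.keys f \<subseteq> Lmons d} \<subseteq> Ipts (qp c t) \<inter> Sdeg d"
  proof
    fix g assume "g \<in> Phi c t d ` {f. Poly_Mapping.keys f \<subseteq> Lmons d}"
    then obtain f where f: "Poly_Mapping.keys f \<subseteq> Lmons d" and g: "g = Phi c t d f" by auto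
    have "g \<in> Sdeg d" using Phi_Sdeg[OF f] g by simp
    moreover have "g \<in> Ipts (qp c t)" using \<open>g \<in> Sdeg d\<close> Phi_ev[OF f] g by (simp add: Ipts_hom_iff)
    ultimately show "g \<in> Ipts (qp c t) \<inter> Sdeg d" by simp
  qed
qed

lemma Phi_inj: "inj_on (Phi c t d) {f. Poly_Mapping.keys f \<subseteq> Lmons d}"
  by (rule inj_on_inverseI[where g="piL d"]) (simp add: Phi_piL)

lemma kdim_It:
  assumes t: "t \<noteq> 0"
  shows "kdim (Ipts (qp c t) \<inter> Sdeg d) = card (Lmons d)"
proof -
  let ?B = "(\<lambda>m. Poly_Mapping.single m (1::'k)) ` Lmons d"
  have spB: "vs.span ?B = {f. Poly_Mapping.keys f \<subseteq> Lmons d}" by (simp add: span_singles)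
  have "Ipts (qp c t) \<inter> Sdeg d = Phi c t d ` vs.span ?B" using It_deg[OF t] spB by simp
  also have "\<dots> = vs.span (Phi c t d ` ?B)" by (rule module_hom.span_image[OF Phi_hom, symmetric])
  finally have eq: "Ipts (qp c t) \<inter> Sdeg d = vs.span (Phi c t d ` ?B)" .
  have ind: "vs.independent (Phi c t d ` ?B)"
    by (rule module_hom.independent_injective_image[OF Phi_hom indep_singles]) (simp add: spB Phi_inj)
  have "kdim (Ipts (qp c t) \<inter> Sdeg d) = card (Phi c t d ` ?B)"
    unfolding kdim_vs eq by (rule vs.dim_span_eq_card_independent[OF ind])
  also have "\<dots> = card ?B"
    by (rule card_image, rule inj_on_subset[OF Phi_inj]) auto
  also have "\<dots> = card (Lmons d)"
    by (rule card_image, rule inj_onI) (metis lookup_single_eq lookup_single_not_eq zero_neq_one)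
  finally show ?thesis .
qed

lemma It_Hpts:
  assumes t: "t \<noteq> 0"
  shows "Ipts (qp c t) \<in> Hpts"
  unfolding Hpts_def
proof (intro CollectI conjI allI impI)
  show "homogeneous_ideal (Ipts (qp c t))" by (rule Ipts_homogeneous)
  show "hilb (Ipts (qp c t)) 0 = 1" by (simp add: hilb_std kdim_It[OF t] card_std)
  fix d :: nat assume "1 \<le> d"
  thus "hilb (Ipts (qp c t)) d = 4" by (simp add: hilb_std kdim_It[OF t] card_std)
qed

lemma It_sat: "saturated (Ipts (qp c t))"
  by (rule Ipts_saturated) (simp add: qpW)

end

context cpar begin

lemma frame_t:
  assumes t: "t \<noteq> 0" and b: "is_frame (lexL :: 'k pol set) b"
  shows "is_frame (Ipts (qp c t)) (\<lambda>d i. Phi c t d (b d i))"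
  unfolding is_frame_def
proof (rule allI)
  fix d
  let ?LS = "{f :: 'k pol. Poly_Mapping.keys f \<subseteq> Lmons d}"
  have r: "kdim (Ipts (qp c t) \<inter> Sdeg d) = kdim ((lexL :: 'k pol set) \<inter> Sdeg d)"
    by (simp add: kdim_It[OF t] kdim_L)
  define r where "r = kdim ((lexL :: 'k pol set) \<inter> Sdeg d)"
  from b have b1: "\<forall>i<r. b d i \<in> lexL \<inter> Sdeg d" and b2: "inj_on (b d) {..<r}"
    and b3: "vs.independent (b d ` {..<r})" and b4: "vs.span (b d ` {..<r}) = lexL \<inter> Sdeg d"
    and b5: "\<forall>i\<ge>r. b d i = 0"
    unfolding is_frame_def Let_def r_def by blast+
  have LS: "lexL \<inter> Sdeg d = ?LS" by (rule L_deg)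
  have bLS: "b d ` {..<r} \<subseteq> ?LS" using b1 LS by auto
  have img: "(\<lambda>i. Phi c t d (b d i)) ` {..<r} = Phi c t d ` (b d ` {..<r})" by auto
  have A1: "\<forall>i<kdim (Ipts (qp c t) \<inter> Sdeg d). Phi c t d (b d i) \<in> Ipts (qp c t) \<inter> Sdeg d"
    unfolding r unfolding r_def[symmetric] unfolding It_deg[OF t] using bLS by auto
  have A2: "inj_on (\<lambda>i. Phi c t d (b d i)) {..<kdim (Ipts (qp c t) \<inter> Sdeg d)}"
    unfolding r r_def[symmetric]
    using comp_inj_on[OF b2 inj_on_subset[OF Phi_inj bLS]] by (simp add: o_def)
  have A3: "vs.independent ((\<lambda>i. Phi c t d (b d i)) ` {..<kdim (Ipts (qp c t) \<inter> Sdeg d)})"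
    unfolding r r_def[symmetric] img
    by (rule module_hom.independent_injective_image[OF Phi_hom b3]) (simp add: b4 LS Phi_inj)
  have A4: "vs.span ((\<lambda>i. Phi c t d (b d i)) ` {..<kdim (Ipts (qp c t) \<inter> Sdeg d)}) = Ipts (qp c t) \<inter> Sdeg d"
    unfolding r unfolding r_def[symmetric] unfolding img module_hom.span_image[OF Phi_hom] b4 LS It_deg[OF t] ..
  have A5: "\<forall>i\<ge>kdim (Ipts (qp c t) \<inter> Sdeg d). Phi c t d (b d i) = 0"
    unfolding r unfolding r_def[symmetric] using b5 by (simp add: Phi_def Corr_def)
  show "let r = kdim (Ipts (qp c t) \<inter> Sdeg d) in
      (\<forall>i<r. Phi c t d (b d i) \<in> Ipts (qp c t) \<inter> Sdeg d) \<and> inj_on (\<lambda>i. Phi c t d (b d i)) {..<r}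
      \<and> vs.independent ((\<lambda>i. Phi c t d (b d i)) ` {..<r})
      \<and> vs.span ((\<lambda>i. Phi c t d (b d i)) ` {..<r}) = Ipts (qp c t) \<inter> Sdeg d
      \<and> (\<forall>i\<ge>r. Phi c t d (b d i) = 0)"
    unfolding Let_def using A1 A2 A3 A4 A5 by blast
qed

lemma frame_keys:
  assumes b: "is_frame (lexL :: 'k pol set) b"
  shows "Poly_Mapping.keys (b d i) \<subseteq> Lmons d"
proof -
  define r where "r = kdim ((lexL :: 'k pol set) \<inter> Sdeg d)"
  from b have b1: "\<forall>i<r. b d i \<in> lexL \<inter> Sdeg d" and b5: "\<forall>i\<ge>r. b d i = 0"
    unfolding is_frame_def Let_def r_def by blast+
  show ?thesis
  proof (cases "i < r")
    case True thus ?thesis using b1 L_deg by blast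
  next
    case False thus ?thesis using b5 by simp
  qed
qed

definition Cv :: "(nat \<Rightarrow> nat \<Rightarrow> 'k pol) \<Rightarrow> nat \<times> nat \<times> mon \<Rightarrow> 'k poly" where
  "Cv b = (\<lambda>(d, i, n). CP c d (b d i) n)"

lemma peval_poly:
  "peval P (\<lambda>v. poly (F v) t) = poly (\<Sum>e\<in>Poly_Mapping.keys P. [:Poly_Mapping.lookup P e:] * (\<Prod>v\<in>Poly_Mapping.keys e. F v ^ Poly_Mapping.lookup e v)) t"
  by (simp add: peval_def poly_sum poly_prod)

lemma main:
  assumes b: "is_frame (lexL :: 'k pol set) b"
    and P: "\<forall>I\<in>{I \<in> Hpts. saturated I}. \<forall>b. is_frame I b \<longrightarrow> peval P (frame_coord b) = 0"
  shows "peval P (frame_coord b) = 0"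
proof -
  define Q where "Q = (\<Sum>e\<in>Poly_Mapping.keys P. [:Poly_Mapping.lookup P e:] * (\<Prod>v\<in>Poly_Mapping.keys e. Cv b v ^ Poly_Mapping.lookup e v))"
  have fc: "frame_coord (\<lambda>d i. Phi c t d (b d i)) = (\<lambda>v. poly (Cv b v) t)" for t
    by (auto simp: frame_coord_def Cv_def Phi_poly)
  have "poly Q t = 0" if t: "t \<noteq> 0" for t
  proof -
    have "peval P (frame_coord (\<lambda>d i. Phi c t d (b d i))) = 0"
      using P It_Hpts[OF t] It_sat frame_t[OF t b] by blast
    thus ?thesis by (simp add: fc peval_poly Q_def)
  qed
  hence "Q = 0" by (rule poly_zero_many_roots)
  hence "poly Q 0 = 0" by simp
  moreover have "frame_coord b = (\<lambda>v. poly (Cv b v) 0)"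
    by (auto simp: frame_coord_def Cv_def CP_0[OF frame_keys[OF b]])
  ultimately show ?thesis by (simp add: peval_poly Q_def)
qed

end

theorem lemma4p1:
  assumes "(2::'k::alg_closed_field) \<noteq> 0"
  shows "(lexL :: 'k pol set) \<in> Xcomp"
proof -
  have "infinite (UNIV - {0, 1, -1 :: 'k})" using infinite_alg_closed by auto
  then obtain c :: 'k where "c \<notin> {0, 1, -1}" using ex_in_conv finite.emptyI by (metis Diff_iff UNIV_I finite.emptyI finite_insert finite_Diff2 infinite_imp_nonempty)
  then interpret cp: cpar c using assms by unfold_locales auto
  show ?thesis
    unfolding Xcomp_def zclosure_def
    using L_Hpts cp.main by blast
qed

end
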